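(* Define $a_n=0$ if $n$ is not a power of $2$, $a_1=1$, and $a_{2^k}=-1$ for $k\ge1$. Then $Tf(x)=f(x)-f(2x)-f(4x)-f(8x)-\dots=\sum_na_nf(nx)$ satisfies $\|Tf\|_{L^2}=\sqrt2\,\|f\|_{L^2}$ for all $f\in C_0(0,\infty)$, and hence extends to $\sqrt2$ times a unitary operator on $L^2[0,\infty)$.
   Context: $C_0(0,\infty)$ denotes continuous compactly supported functions on $(0,\infty)$; $L^2=L^2[0,\infty)$ with Lebesgue measure. *)

theory Defs
  imports "HOL-Analysis.Analysis"
begin

definition coef :: "nat \<Rightarrow> complex" where
  "coef n = (if n = 1 then 1 else if (\<exists>k::nat. k \<ge> 1 \<and> n = 2 ^ k) then -1 else 0)"

definition C0pos :: "(real \<Rightarrow> complex) \<Rightarrow> bool" where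
  "C0pos f \<longleftrightarrow> continuous_on {0<..} f \<and>
     (\<exists>K. compact K \<and> K \<subseteq> {0<..} \<and> (\<forall>x. x \<notin> K \<longrightarrow> f x = 0))"

definition L2 :: "(real \<Rightarrow> complex) \<Rightarrow> bool" where
  "L2 f \<longleftrightarrow> set_borel_measurable lebesgue {0..} f \<and>
     set_integrable lebesgue {0..} (\<lambda>x. (cmod (f x))\<^sup>2)"

definition L2norm :: "(real \<Rightarrow> complex) \<Rightarrow> real" where
  "L2norm f = sqrt (LINT x:{0..}|lebesgue. (cmod (f x))\<^sup>2)"

definition ae_eq :: "(real \<Rightarrow> complex) \<Rightarrow> (real \<Rightarrow> complex) \<Rightarrow> bool" where
  "ae_eq f g \<longleftrightarrow> (AE x in lebesgue. x \<in> {0..} \<longrightarrow> f x = g x)"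

definition Top :: "(real \<Rightarrow> complex) \<Rightarrow> real \<Rightarrow> complex" where
  "Top f x = (\<Sum>n. coef (Suc n) * f (real (Suc n) * x))"

text \<open>A unitary operator on L^2[0,infinity) (acting on representatives, modulo a.e. equality):
  maps L^2 into L^2, linear, norm preserving, and onto.\<close>
definition unitary_L2 :: "((real \<Rightarrow> complex) \<Rightarrow> (real \<Rightarrow> complex)) \<Rightarrow> bool" where
  "unitary_L2 U \<longleftrightarrow>
     (\<forall>f. L2 f \<longrightarrow> L2 (U f)) \<and>
     (\<forall>f g. L2 f \<longrightarrow> L2 g \<longrightarrow> ae_eq (U (\<lambda>x. f x + g x)) (\<lambda>x. U f x + U g x)) \<and>
     (\<forall>f c. L2 f \<longrightarrow> ae_eq (U (\<lambda>x. c * f x)) (\<lambda>x. c * U f x)) \<and>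
     (\<forall>f. L2 f \<longrightarrow> L2norm (U f) = L2norm f) \<and>
     (\<forall>g. L2 g \<longrightarrow> (\<exists>f. L2 f \<and> ae_eq (U f) g))"

end

theory Submission
  imports Defs
begin

definition NN :: "(real \<Rightarrow> complex) \<Rightarrow> ennreal" where
  "NN f = (\<integral>\<^sup>+x. ennreal (indicator {0..} x * (cmod (f x))\<^sup>2) \<partial>lebesgue)"

definition fz :: "(real \<Rightarrow> complex) \<Rightarrow> real \<Rightarrow> complex" where
  "fz f = (\<lambda>x. indicator {0..} x *\<^sub>R f x)"

definition Ser :: "(nat \<Rightarrow> complex) \<Rightarrow> (nat \<Rightarrow> real) \<Rightarrow> (real \<Rightarrow> complex) \<Rightarrow> real \<Rightarrow> complex" where
  "Ser a l f x = (if summable (\<lambda>k. cmod (a k * f (l k * x))) then (\<Sum>k. a k * f (l k * x)) else 0)"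

lemma ident_leb[measurable]: "(\<lambda>x::real. x) \<in> borel_measurable lebesgue"
  by (rule measurable_completion) simp

lemma scale_nn:
  fixes H :: "real \<Rightarrow> ennreal"
  assumes H: "H \<in> borel_measurable lebesgue" and c: "c > 0"
  shows "(\<integral>\<^sup>+x. H (c * x) \<partial>lebesgue) = ennreal (1/c) * (\<integral>\<^sup>+x. H x \<partial>lebesgue)"
proof -
  have "(\<integral>\<^sup>+x. H x \<partial>lebesgue) = ennreal \<bar>c\<bar> * (\<integral>\<^sup>+x. H (0 + c * x) \<partial>lebesgue)"
    using nn_integral_real_affine_lebesgue[OF H, of c 0] c by simp
  then have "ennreal (1/c) * (\<integral>\<^sup>+x. H x \<partial>lebesgue) = ennreal (1/c) * ennreal c * (\<integral>\<^sup>+x. H (c * x) \<partial>lebesgue)"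
    using c by (simp add: mult.assoc)
  also have "ennreal (1/c) * ennreal c = 1" using c by (simp flip: ennreal_mult)
  finally show ?thesis by simp
qed

lemma meas_scale:
  fixes f :: "real \<Rightarrow> 'b::topological_space"
  assumes "f \<in> borel_measurable lebesgue"
  shows "(\<lambda>x. f (c * x)) \<in> borel_measurable lebesgue"
proof -
  have "(\<lambda>x. f (c *\<^sub>R x)) \<in> borel_measurable lebesgue"
    by (rule measurable_compose[OF lebesgue_measurable_scaling assms])
  then show ?thesis by simp
qed

lemma NN_scale:
  assumes f: "f \<in> borel_measurable lebesgue" and c: "c > 0"
  shows "NN (\<lambda>x. f (c * x)) = ennreal (1/c) * NN f"
proof -
  let ?H = "\<lambda>y. ennreal (indicator {0..} y * (cmod (f y))\<^sup>2)"
  have Hm: "?H \<in> borel_measurable lebesgue" using f by measurable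
  have "\<And>x. indicator {0..} (c * x) = (indicator {0..} x :: real)"
    using c by (auto simp: indicator_def zero_le_mult_iff)
  then have "NN (\<lambda>x. f (c * x)) = (\<integral>\<^sup>+x. ?H (c * x) \<partial>lebesgue)"
    unfolding NN_def by simp
  also have "\<dots> = ennreal (1/c) * NN f" unfolding NN_def by (rule scale_nn[OF Hm c])
  finally show ?thesis .
qed


lemma cs_bound:
  fixes c :: "nat \<Rightarrow> real"
  assumes c0: "\<And>k. c k \<ge> 0"
    and fin: "(\<Sum>k. ennreal ((c k)\<^sup>2 / (3/4)^k)) \<noteq> top"
  shows "summable c \<and> ennreal ((suminf c)\<^sup>2) \<le> 4 * (\<Sum>k. ennreal ((c k)\<^sup>2 / (3/4)^k))"
proof -
  define w :: "nat \<Rightarrow> real" where "w k = (3/4)^k" for k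
  have w0: "w k > 0" for k by (simp add: w_def)
  have sq: "summable (\<lambda>k. (c k)\<^sup>2 / w k)"
    using fin by (intro summable_suminf_not_top) (auto simp: w_def)
  define s where "s = (\<Sum>k. (c k)\<^sup>2 / w k)"
  have s0: "s \<ge> 0" unfolding s_def using sq w0 by (intro suminf_nonneg) (auto intro: divide_nonneg_pos)
  have eqs: "(\<Sum>k. ennreal ((c k)\<^sup>2 / (3/4)^k)) = ennreal s"
    unfolding s_def using sq w0 by (subst suminf_ennreal2) (auto simp: w_def)
  have ws: "summable w" unfolding w_def by (rule summable_geometric) simp
  have wsum: "suminf w = 4" unfolding w_def by (subst suminf_geometric) auto
  have bnd: "(\<Sum>k<n. c k) \<le> 2 * sqrt s" for n
  proof -
    have "(\<Sum>k<n. c k)\<^sup>2 = (\<Sum>k<n. sqrt (w k) * (c k / sqrt (w k)))\<^sup>2"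
    proof -
      have "sqrt (w k) * (c k / sqrt (w k)) = c k" for k using w0[of k] by simp
      then show ?thesis by simp
    qed
    also have "\<dots> \<le> (\<Sum>k<n. (sqrt (w k))\<^sup>2) * (\<Sum>k<n. (c k / sqrt (w k))\<^sup>2)"
      by (rule Cauchy_Schwarz_ineq_sum)
    also have "\<dots> = (\<Sum>k<n. w k) * (\<Sum>k<n. (c k)\<^sup>2 / w k)"
      using w0 by (simp add: less_imp_le power_divide)
    also have "\<dots> \<le> 4 * s"
    proof (rule mult_mono)
      show "(\<Sum>k<n. w k) \<le> 4" using wsum ws w0 sum_le_suminf[of w "{..<n}"] by (auto simp: less_imp_le)
      show "(\<Sum>k<n. (c k)\<^sup>2 / w k) \<le> s" unfolding s_def using sq w0
        by (intro sum_le_suminf) (auto simp: less_imp_le)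
    qed (use w0 in \<open>auto intro!: sum_nonneg simp: less_imp_le\<close>)
    finally have "(\<Sum>k<n. c k)\<^sup>2 \<le> (2 * sqrt s)\<^sup>2" using s0 by (simp add: power_mult_distrib)
    moreover have "0 \<le> 2 * sqrt s" using s0 by simp
    ultimately show ?thesis by (rule power2_le_imp_le)
  qed
  have sc: "summable c" by (rule summableI_nonneg_bounded[OF c0 bnd])
  have "suminf c \<le> 2 * sqrt s" by (rule suminf_le_const[OF sc bnd])
  moreover have "suminf c \<ge> 0" by (rule suminf_nonneg[OF sc c0])
  ultimately have "(suminf c)\<^sup>2 \<le> (2 * sqrt s)\<^sup>2" by (rule power_mono)
  also have "\<dots> = 4 * s" using s0 by (simp add: power_mult_distrib)
  finally have "ennreal ((suminf c)\<^sup>2) \<le> ennreal (4 * s)" by (rule ennreal_leI)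
  then show ?thesis using sc eqs s0 by (simp add: ennreal_mult)
qed

lemma Ser_meas:
  assumes f: "f \<in> borel_measurable lebesgue"
  shows "Ser a l f \<in> borel_measurable lebesgue"
proof -
  define P where "P x = summable (\<lambda>k. cmod (a k * f (l k * x)))" for x
  have fm: "(\<lambda>x. f (l k * x)) \<in> borel_measurable lebesgue" for k by (rule meas_scale[OF f])
  have Peq: "P x \<longleftrightarrow> (\<Sum>k. ennreal (cmod (a k * f (l k * x)))) \<noteq> top" for x
  proof
    assume "P x" then show "(\<Sum>k. ennreal (cmod (a k * f (l k * x)))) \<noteq> top"
      unfolding P_def by (subst suminf_ennreal2) auto
  next
    assume "(\<Sum>k. ennreal (cmod (a k * f (l k * x)))) \<noteq> top"
    then show "P x" unfolding P_def by (intro summable_suminf_not_top) auto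
  qed
  have Pm: "Measurable.pred lebesgue P"
    unfolding Peq using fm by measurable
  define F where "F n x = (if P x then (\<Sum>k<n. a k * f (l k * x)) else 0)" for n x
  have Fm: "F n \<in> borel_measurable lebesgue" for n
    unfolding F_def using Pm fm by measurable
  show ?thesis
  proof (rule borel_measurable_LIMSEQ_metric[OF Fm])
    fix x
    show "(\<lambda>n. F n x) \<longlonglongrightarrow> Ser a l f x"
    proof (cases "P x")
      case True
      then have "summable (\<lambda>k. a k * f (l k * x))" unfolding P_def by (rule summable_norm_cancel)
      then show ?thesis using True unfolding F_def Ser_def P_def
        by (simp add: summable_LIMSEQ)
    next
      case False then show ?thesis unfolding F_def Ser_def P_def by simp
    qed
  qed
qed


lemma Ser_restrict:
  assumes "\<And>y. y \<ge> 0 \<Longrightarrow> p y = q y" and "\<And>k. l k > 0" and "x \<ge> 0"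
  shows "Ser a l p x = Ser a l q x"
proof -
  have "p (l k * x) = q (l k * x)" for k
    using assms by (intro assms(1)) (simp add: less_imp_le)
  then show ?thesis unfolding Ser_def by simp
qed

lemma Ser_add:
  assumes sp: "summable (\<lambda>k. cmod (a k * p (l k * x)))"
    and sq: "summable (\<lambda>k. cmod (a k * q (l k * x)))"
  shows "Ser a l (\<lambda>y. p y + q y) x = Ser a l p x + Ser a l q x"
proof -
  have s: "summable (\<lambda>k. cmod (a k * (p (l k * x) + q (l k * x))))"
  proof (rule summable_comparison_test)
    show "\<exists>N. \<forall>n\<ge>N. norm (cmod (a n * (p (l n * x) + q (l n * x)))) \<le> cmod (a n * p (l n * x)) + cmod (a n * q (l n * x))"
      by (auto simp: distrib_left norm_triangle_ineq)
    show "summable (\<lambda>n. cmod (a n * p (l n * x)) + cmod (a n * q (l n * x)))"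
      using sp sq by (rule summable_add)
  qed
  have "(\<Sum>k. a k * (p (l k * x) + q (l k * x))) = (\<Sum>k. a k * p (l k * x)) + (\<Sum>k. a k * q (l k * x))"
    using summable_norm_cancel[OF sp] summable_norm_cancel[OF sq]
    by (simp add: distrib_left suminf_add)
  then show ?thesis using s sp sq unfolding Ser_def by simp
qed

lemma Ser_mult:
  assumes sp: "summable (\<lambda>k. cmod (a k * p (l k * x)))"
  shows "Ser a l (\<lambda>y. c * p y) x = c * Ser a l p x"
proof -
  have s: "summable (\<lambda>k. cmod (a k * (c * p (l k * x))))"
    using summable_mult[OF sp, of "cmod c"] by (simp add: norm_mult mult.left_commute)
  have "(\<Sum>k. a k * (c * p (l k * x))) = c * (\<Sum>k. a k * p (l k * x))"
    using suminf_mult[OF summable_norm_cancel[OF sp], of c] by (simp add: mult.left_commute)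
  then show ?thesis using s sp unfolding Ser_def by simp
qed

abbreviation SS :: "(real \<Rightarrow> complex) \<Rightarrow> real \<Rightarrow> complex" where
  "SS \<equiv> Ser (\<lambda>_. 1) (\<lambda>k. 2 ^ Suc k)"

abbreviation RR :: "(real \<Rightarrow> complex) \<Rightarrow> real \<Rightarrow> complex" where
  "RR \<equiv> Ser (\<lambda>k. complex_of_real (1 / 2 ^ Suc k)) (\<lambda>k. 1 / 2 ^ Suc k)"

lemma SS_rec:
  assumes s: "summable (\<lambda>k. cmod (1 * f (2 ^ Suc k * x)))"
  shows "SS f x = f (2 * x) + SS f (2 * x)"
proof -
  define t where "t k = f (2 ^ Suc k * x)" for k
  have t2: "f (2 ^ Suc k * (2 * x)) = t (Suc k)" for k
    unfolding t_def by (simp add: mult.assoc mult.left_commute)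
  have st: "summable (\<lambda>k. cmod (t k))" using s unfolding t_def by simp
  have st2: "summable (\<lambda>k. cmod (t (Suc k)))" using summable_Suc_iff[of "\<lambda>k. cmod (t k)"] st by simp
  have sum: "summable t" using st by (rule summable_norm_cancel)
  have "suminf t = t 0 + (\<Sum>k. t (Suc k))" using suminf_split_head[OF sum] by simp
  moreover have "SS f x = suminf t" using st unfolding Ser_def t_def by simp
  moreover have "SS f (2 * x) = (\<Sum>k. t (Suc k))" using st2 unfolding Ser_def t2 by simp
  moreover have "t 0 = f (2 * x)" unfolding t_def by simp
  ultimately show ?thesis by simp
qed

lemma RR_rec:
  assumes s: "summable (\<lambda>k. cmod (complex_of_real (1 / 2 ^ Suc k) * g (1 / 2 ^ Suc k * x)))"
  shows "RR g (2 * x) = g x / 2 + RR g x / 2"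
proof -
  define t where "t k = complex_of_real (1 / 2 ^ Suc k) * g (1 / 2 ^ Suc k * x)" for k
  define t' where "t' k = complex_of_real (1 / 2 ^ Suc k) * g (1 / 2 ^ Suc k * (2 * x))" for k
  have t'S: "t' (Suc k) = t k / 2" for k
    unfolding t_def t'_def by (simp add: field_simps)
  have t'0: "t' 0 = g x / 2" unfolding t'_def by simp
  have st: "summable (\<lambda>k. cmod (t k))" using s unfolding t_def by simp
  have st2: "summable (\<lambda>k. cmod (t' k))"
    unfolding summable_Suc_iff[symmetric, of "\<lambda>k. cmod (t' k)"] t'S
    using summable_divide[OF st, of 2] by (simp add: norm_divide)
  have sum: "summable t'" using st2 by (rule summable_norm_cancel)
  have "suminf t' = t' 0 + (\<Sum>k. t' (Suc k))" using suminf_split_head[OF sum] by simp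
  also have "(\<Sum>k. t' (Suc k)) = (\<Sum>k. t k) / 2" unfolding t'S
    by (rule suminf_divide[OF summable_norm_cancel[OF st]])
  finally have "suminf t' = g x / 2 + suminf t / 2" using t'0 by simp
  moreover have "RR g (2 * x) = suminf t'" using st2 unfolding Ser_def t'_def by simp
  moreover have "RR g x = suminf t" using st unfolding Ser_def t_def by simp
  ultimately show ?thesis by simp
qed


lemma key:
  fixes f :: "real \<Rightarrow> complex"
  assumes fm: "f \<in> borel_measurable lebesgue" and Nf: "NN f < top"
    and lpos: "\<And>k. l k > 0" and al: "\<And>k. (cmod (a k))\<^sup>2 / l k = (1/2)^Suc k"
  shows "(AE x in lebesgue. x \<ge> 0 \<longrightarrow> summable (\<lambda>k. cmod (a k * f (l k * x)))) \<and> NN (Ser a l f) < top"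
proof -
  define t where "t k x = cmod (a k * f (l k * x))" for k x
  define B where "B x = (\<Sum>k. ennreal (indicator {0..} x * (t k x)\<^sup>2 / (3/4)^k))" for x
  have fkm: "(\<lambda>x. f (l k * x)) \<in> borel_measurable lebesgue" for k by (rule meas_scale[OF fm])
  have tm: "(\<lambda>x. t k x) \<in> borel_measurable lebesgue" for k
    unfolding t_def using fkm[of k] by measurable
  have termm: "(\<lambda>x. ennreal (indicator {0..} x * (t k x)\<^sup>2 / (3/4)^k)) \<in> borel_measurable lebesgue" for k
    using tm[of k] by measurable
  have Bm: "B \<in> borel_measurable lebesgue" unfolding B_def using termm by measurable
  have termint: "(\<integral>\<^sup>+x. ennreal (indicator {0..} x * (t k x)\<^sup>2 / (3/4)^k) \<partial>lebesgue) = ennreal ((1/2) * (2/3)^k) * NN f" for k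
  proof -
    have "(\<integral>\<^sup>+x. ennreal (indicator {0..} x * (t k x)\<^sup>2 / (3/4)^k) \<partial>lebesgue) =
        (\<integral>\<^sup>+x. ennreal ((cmod (a k))\<^sup>2 / (3/4)^k) * ennreal (indicator {0..} x * (cmod (f (l k * x)))\<^sup>2) \<partial>lebesgue)"
      by (intro nn_integral_cong) (simp add: t_def norm_mult power_mult_distrib ennreal_mult'[symmetric])
    also have "\<dots> = ennreal ((cmod (a k))\<^sup>2 / (3/4)^k) * NN (\<lambda>x. f (l k * x))"
      unfolding NN_def by (rule nn_integral_cmult) (use fkm[of k] in measurable)
    also have "\<dots> = ennreal ((cmod (a k))\<^sup>2 / (3/4)^k) * (ennreal (1 / l k) * NN f)"
      by (simp add: NN_scale[OF fm lpos])
    also have "\<dots> = ennreal ((cmod (a k))\<^sup>2 / (3/4)^k * (1 / l k)) * NN f"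
    proof -
      have "ennreal ((cmod (a k))\<^sup>2 / (3/4)^k) * ennreal (1 / l k) = ennreal ((cmod (a k))\<^sup>2 / (3/4)^k * (1 / l k))"
        by (rule ennreal_mult[symmetric]) (use lpos[of k] in auto)
      then show ?thesis by (simp only: mult.assoc[symmetric])
    qed
    also have "(cmod (a k))\<^sup>2 / (3/4)^k * (1 / l k) = ((cmod (a k))\<^sup>2 / l k) / (3/4)^k"
      by simp
    also have "\<dots> = (1/2) * (2/3)^k" unfolding al by (simp add: field_simps power_divide flip: power_mult_distrib)
    finally show ?thesis .
  qed
  have geo: "(\<Sum>k. ennreal ((1/2) * (2/3::real)^k)) = ennreal (3/2)"
  proof -
    have "summable (\<lambda>k. (1/2) * (2/3::real)^k)" by (intro summable_mult summable_geometric) simp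
    moreover have "(\<Sum>k. (1/2) * (2/3::real)^k) = 3/2"
    proof -
      have "(\<Sum>k. (2/3::real)^k) = 3" by (subst suminf_geometric) simp_all
      then show ?thesis using suminf_mult[OF summable_geometric[of "2/3::real"], of "1/2"] by simp
    qed
    ultimately show ?thesis by (subst suminf_ennreal2) auto
  qed
  have intB: "(\<integral>\<^sup>+x. B x \<partial>lebesgue) = ennreal (3/2) * NN f"
    unfolding B_def using termm by (subst nn_integral_suminf) (auto simp: termint geo[simplified])
  have Bfin: "(\<integral>\<^sup>+x. B x \<partial>lebesgue) \<noteq> top"
    unfolding intB using Nf by (simp add: ennreal_mult_eq_top_iff)
  have AEB: "AE x in lebesgue. B x \<noteq> top" using nn_integral_PInf_AE[of B lebesgue] Bm Bfin by (simp add: infinity_ennreal_def)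
  have pt: "summable (\<lambda>k. t k x) \<and> ennreal ((suminf (\<lambda>k. t k x))\<^sup>2) \<le> 4 * B x"
    if "x \<ge> 0" "B x \<noteq> top" for x
  proof -
    have eq: "(\<Sum>k. ennreal ((t k x)\<^sup>2 / (3 / 4) ^ k)) = B x" using that(1) unfolding B_def by simp
    have "\<And>k. 0 \<le> t k x" by (simp add: t_def)
    from cs_bound[of "\<lambda>k. t k x", OF this] eq that(2) show ?thesis by simp
  qed
  have AE1: "AE x in lebesgue. x \<ge> 0 \<longrightarrow> summable (\<lambda>k. cmod (a k * f (l k * x)))"
    using AEB by eventually_elim (use pt in \<open>auto simp: t_def\<close>)
  have bnd: "ennreal (indicator {0..} x * (cmod (Ser a l f x))\<^sup>2) \<le> 4 * B x" if "B x \<noteq> top" for x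
  proof (cases "x \<ge> 0")
    case True
    from pt[OF True that] have st: "summable (\<lambda>k. t k x)" and le: "ennreal ((suminf (\<lambda>k. t k x))\<^sup>2) \<le> 4 * B x"
      by auto
    have "Ser a l f x = (\<Sum>k. a k * f (l k * x))" using st unfolding Ser_def t_def by simp
    then have "cmod (Ser a l f x) \<le> suminf (\<lambda>k. t k x)"
      using summable_norm[of "\<lambda>k. a k * f (l k * x)"] st unfolding t_def by simp
    then have "(cmod (Ser a l f x))\<^sup>2 \<le> (suminf (\<lambda>k. t k x))\<^sup>2" by (intro power_mono) auto
    then have "ennreal (indicator {0..} x * (cmod (Ser a l f x))\<^sup>2) \<le> ennreal ((suminf (\<lambda>k. t k x))\<^sup>2)"
      using True by (intro ennreal_leI) simp
    then show ?thesis using le by (rule order_trans)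
  next
    case False then show ?thesis by simp
  qed
  have "NN (Ser a l f) \<le> (\<integral>\<^sup>+x. 4 * B x \<partial>lebesgue)"
    unfolding NN_def using AEB by (intro nn_integral_mono_AE) (auto elim!: eventually_mono intro: bnd)
  also have "\<dots> = 4 * (\<integral>\<^sup>+x. B x \<partial>lebesgue)" using Bm by (rule nn_integral_cmult)
  also have "\<dots> < top" using Bfin by (simp add: ennreal_mult_less_top less_top)
  finally show ?thesis using AE1 by simp
qed


lemma par_c: "(cmod (a - b))\<^sup>2 + (cmod (a + b))\<^sup>2 = 2 * (cmod a)\<^sup>2 + 2 * (cmod b)\<^sup>2"
  unfolding cmod_power2 by (simp add: power2_eq_square algebra_simps)

lemma NN_meas:
  fixes f :: "real \<Rightarrow> complex"
  assumes "f \<in> borel_measurable lebesgue"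
  shows "(\<lambda>x. ennreal (indicator {0..} x * (cmod (f x))\<^sup>2)) \<in> borel_measurable lebesgue"
  using assms by measurable

lemma SS_key:
  assumes fm: "f \<in> borel_measurable lebesgue" and Nf: "NN f < top"
  shows "(AE x in lebesgue. x \<ge> 0 \<longrightarrow> summable (\<lambda>k. cmod (1 * f (2 ^ Suc k * x)))) \<and> NN (SS f) < top"
  by (rule key[OF fm Nf]) (simp_all add: power_one_over)

lemma RR_key:
  assumes fm: "f \<in> borel_measurable lebesgue" and Nf: "NN f < top"
  shows "(AE x in lebesgue. x \<ge> 0 \<longrightarrow> summable (\<lambda>k. cmod (complex_of_real (1 / 2 ^ Suc k) * f (1 / 2 ^ Suc k * x)))) \<and> NN (RR f) < top"
  by (rule key[OF fm Nf]) (simp_all add: power_one_over power2_eq_square norm_divide norm_mult norm_power)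

lemma uniq:
  assumes hm: "h \<in> borel_measurable lebesgue" and Nh: "NN h < top"
    and rec: "AE x in lebesgue. x \<ge> 0 \<longrightarrow> h x = h (2 * x)"
  shows "AE x in lebesgue. x \<ge> 0 \<longrightarrow> h x = 0"
proof -
  have "NN h = NN (\<lambda>x. h (2 * x))"
    unfolding NN_def using rec by (intro nn_integral_cong_AE) (auto elim!: eventually_mono)
  also have "\<dots> = ennreal (1/2) * NN h" by (rule NN_scale[OF hm]) simp
  finally have eq: "NN h = ennreal (1/2) * NN h" .
  obtain r where r: "r \<ge> 0" "NN h = ennreal r" using Nh by (auto simp: less_top_ennreal)
  have m1: "ennreal (1/2) * ennreal r = ennreal (1/2 * r)" by (rule ennreal_mult[symmetric]) (use r in auto)
  have m2: "ennreal r = ennreal (1/2) * ennreal r" using eq unfolding r(2) .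
  have "ennreal r = ennreal (1/2 * r)" using m2 m1 by (rule trans)
  then have "r = 1/2 * r" using r by (subst (asm) ennreal_inj) auto
  then have "NN h = 0" using r by simp
  then have "AE x in lebesgue. ennreal (indicator {0..} x * (cmod (h x))\<^sup>2) = 0"
    unfolding NN_def using NN_meas[OF hm] by (simp add: nn_integral_0_iff_AE)
  then show ?thesis by (auto elim!: eventually_mono)
qed

lemma iso:
  assumes fm: "f \<in> borel_measurable lebesgue" and Nf: "NN f < top"
  shows "NN (\<lambda>x. f x - SS f x) = 2 * NN f"
proof -
  define u where "u = SS f"
  have um: "u \<in> borel_measurable lebesgue" unfolding u_def by (rule Ser_meas[OF fm])
  have AE: "AE x in lebesgue. x \<ge> 0 \<longrightarrow> summable (\<lambda>k. cmod (1 * f (2 ^ Suc k * x)))"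
    and Nu: "NN u < top" using SS_key[OF fm Nf] unfolding u_def by auto
  have rec: "AE x in lebesgue. x \<ge> 0 \<longrightarrow> u x = f (2 * x) + u (2 * x)"
    using AE
  proof eventually_elim
    case (elim x) then show ?case using SS_rec[of f x] unfolding u_def by blast
  qed
  have fum: "(\<lambda>y. f y + u y) \<in> borel_measurable lebesgue" using fm um by measurable
  have "NN u = NN (\<lambda>x. f (2 * x) + u (2 * x))"
    unfolding NN_def using rec by (intro nn_integral_cong_AE) (auto elim!: eventually_mono)
  also have "\<dots> = ennreal (1/2) * NN (\<lambda>y. f y + u y)"
    using NN_scale[OF fum, of 2] by simp
  finally have e1: "NN u = ennreal (1/2) * NN (\<lambda>y. f y + u y)" .
  have h: "ennreal 2 * ennreal (1/2) = ennreal (2 * (1/2))" by (rule ennreal_mult[symmetric]) auto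
  have h1: "ennreal (2 * (1/2)) = 1" by simp
  have h2: "(2::ennreal) * ennreal (1/2) = 1" using h h1 by (simp only: ennreal_numeral)
  have e2: "NN (\<lambda>y. f y + u y) = 2 * NN u"
  proof -
    have "NN (\<lambda>y. f y + u y) = 1 * NN (\<lambda>y. f y + u y)" by (simp only: mult_1)
    also have "\<dots> = (2 * ennreal (1/2)) * NN (\<lambda>y. f y + u y)" by (simp only: h2)
    also have "\<dots> = 2 * (ennreal (1/2) * NN (\<lambda>y. f y + u y))" by (simp only: mult.assoc)
    also have "\<dots> = 2 * NN u" by (simp only: e1[symmetric])
    finally show ?thesis .
  qed
  have par: "NN (\<lambda>x. f x - u x) + NN (\<lambda>x. f x + u x) = 2 * NN f + 2 * NN u"
  proof -
    define A where "A x = ennreal (indicator {0..} x * (cmod (f x))\<^sup>2)" for x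
    define B where "B x = ennreal (indicator {0..} x * (cmod (u x))\<^sup>2)" for x
    define C where "C x = ennreal (indicator {0..} x * (cmod (f x - u x))\<^sup>2)" for x
    define D where "D x = ennreal (indicator {0..} x * (cmod (f x + u x))\<^sup>2)" for x
    have fmu: "(\<lambda>x. f x - u x) \<in> borel_measurable lebesgue" using fm um by measurable
    have Am: "A \<in> borel_measurable lebesgue" unfolding A_def by (rule NN_meas[OF fm])
    have Bm: "B \<in> borel_measurable lebesgue" unfolding B_def by (rule NN_meas[OF um])
    have Cm: "C \<in> borel_measurable lebesgue" unfolding C_def by (rule NN_meas[OF fmu])
    have Dm: "D \<in> borel_measurable lebesgue" unfolding D_def by (rule NN_meas[OF fum])
    have A2m: "(\<lambda>x. 2 * A x) \<in> borel_measurable lebesgue" using Am by measurable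
    have B2m: "(\<lambda>x. 2 * B x) \<in> borel_measurable lebesgue" using Bm by measurable
    have pw: "C x + D x = 2 * A x + 2 * B x" for x
    proof -
      define i where "i = (indicator {0..} x :: real)"
      have i0: "i \<ge> 0" unfolding i_def by simp
      have r: "i * (cmod (f x - u x))\<^sup>2 + i * (cmod (f x + u x))\<^sup>2 = 2 * (i * (cmod (f x))\<^sup>2) + 2 * (i * (cmod (u x))\<^sup>2)"
      proof -
        have "i * (cmod (f x - u x))\<^sup>2 + i * (cmod (f x + u x))\<^sup>2 = i * ((cmod (f x - u x))\<^sup>2 + (cmod (f x + u x))\<^sup>2)"
          by (rule distrib_left[symmetric])
        also have "\<dots> = i * (2 * (cmod (f x))\<^sup>2 + 2 * (cmod (u x))\<^sup>2)" by (simp only: par_c)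
        also have "\<dots> = 2 * (i * (cmod (f x))\<^sup>2) + 2 * (i * (cmod (u x))\<^sup>2)" by (simp only: distrib_left mult.left_commute)
        finally show ?thesis .
      qed
      have "C x + D x = ennreal (i * (cmod (f x - u x))\<^sup>2 + i * (cmod (f x + u x))\<^sup>2)"
        unfolding C_def D_def i_def[symmetric] by (rule ennreal_plus[symmetric]) (use i0 in auto)
      also have "\<dots> = ennreal (2 * (i * (cmod (f x))\<^sup>2) + 2 * (i * (cmod (u x))\<^sup>2))" by (simp only: r)
      also have "\<dots> = ennreal (2 * (i * (cmod (f x))\<^sup>2)) + ennreal (2 * (i * (cmod (u x))\<^sup>2))"
        by (rule ennreal_plus) (use i0 in auto)
      also have "ennreal (2 * (i * (cmod (f x))\<^sup>2)) = 2 * A x"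
        unfolding A_def i_def[symmetric] by (subst ennreal_mult) (use i0 in auto)
      also have "ennreal (2 * (i * (cmod (u x))\<^sup>2)) = 2 * B x"
        unfolding B_def i_def[symmetric] by (subst ennreal_mult) (use i0 in auto)
      finally show ?thesis .
    qed
    have "NN (\<lambda>x. f x - u x) + NN (\<lambda>x. f x + u x) = integral\<^sup>N lebesgue C + integral\<^sup>N lebesgue D"
      unfolding NN_def C_def D_def ..
    also have "\<dots> = (\<integral>\<^sup>+x. C x + D x \<partial>lebesgue)" by (rule nn_integral_add[OF Cm Dm, symmetric])
    also have "\<dots> = (\<integral>\<^sup>+x. 2 * A x + 2 * B x \<partial>lebesgue)" by (simp add: pw)
    also have "\<dots> = (\<integral>\<^sup>+x. 2 * A x \<partial>lebesgue) + (\<integral>\<^sup>+x. 2 * B x \<partial>lebesgue)"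
      by (rule nn_integral_add[OF A2m B2m])
    also have "\<dots> = 2 * integral\<^sup>N lebesgue A + 2 * integral\<^sup>N lebesgue B"
      by (simp add: nn_integral_cmult[OF Am] nn_integral_cmult[OF Bm])
    also have "\<dots> = 2 * NN f + 2 * NN u" unfolding NN_def A_def B_def ..
    finally show ?thesis .
  qed
  have "NN (\<lambda>x. f x - u x) + 2 * NN u = 2 * NN f + 2 * NN u" using par e2 by simp
  moreover have "2 * NN u \<noteq> top" using Nu by (simp add: ennreal_mult_eq_top_iff)
  ultimately have "NN (\<lambda>x. f x - u x) = 2 * NN f"
    by (metis add.commute ennreal_add_left_cancel infinity_ennreal_def)
  then show ?thesis unfolding u_def .
qed


lemma fz_sq: "(cmod (fz f x))\<^sup>2 = indicator {0..} x * (cmod (f x))\<^sup>2"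
  by (simp add: fz_def indicator_def)

lemma fz_ge0: "x \<ge> 0 \<Longrightarrow> fz f x = f x"
  by (simp add: fz_def)

lemma NN_fz: "NN (fz f) = NN f"
  unfolding NN_def fz_sq by (intro nn_integral_cong) (auto simp: indicator_def)

lemma NN_alt: "NN f = (\<integral>\<^sup>+x. ennreal ((cmod (fz f x))\<^sup>2) \<partial>lebesgue)"
  unfolding NN_def by (simp add: fz_sq)

lemma fz_meas: "g \<in> borel_measurable lebesgue \<Longrightarrow> fz g \<in> borel_measurable lebesgue"
  unfolding fz_def by measurable

lemma L2_iff: "L2 f \<longleftrightarrow> fz f \<in> borel_measurable lebesgue \<and> NN f < top"
proof -
  have e: "(\<lambda>x. indicator {0..} x *\<^sub>R (cmod (f x))\<^sup>2) = (\<lambda>x. (cmod (fz f x))\<^sup>2)"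
    by (auto simp: fz_def indicator_def)
  have fin: "(\<integral>\<^sup>+x. ennreal (norm ((cmod (fz f x))\<^sup>2)) \<partial>lebesgue) = NN f"
    unfolding NN_alt by simp
  have L: "L2 f \<longleftrightarrow> fz f \<in> borel_measurable lebesgue \<and> integrable lebesgue (\<lambda>x. (cmod (fz f x))\<^sup>2)"
    unfolding L2_def set_borel_measurable_def set_integrable_def e fz_def ..
  show ?thesis
  proof
    assume a: "L2 f"
    have m: "fz f \<in> borel_measurable lebesgue" and i: "integrable lebesgue (\<lambda>x. (cmod (fz f x))\<^sup>2)"
      using a L by blast+
    from i have "(\<integral>\<^sup>+x. ennreal (norm ((cmod (fz f x))\<^sup>2)) \<partial>lebesgue) < \<infinity>"
      unfolding integrable_iff_bounded by blast
    then have "NN f < top" unfolding fin by (simp add: infinity_ennreal_def)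
    with m show "fz f \<in> borel_measurable lebesgue \<and> NN f < top" by blast
  next
    assume a: "fz f \<in> borel_measurable lebesgue \<and> NN f < top"
    then have m: "fz f \<in> borel_measurable lebesgue" by blast
    have m2: "(\<lambda>x. (cmod (fz f x))\<^sup>2) \<in> borel_measurable lebesgue" using m by measurable
    have "(\<integral>\<^sup>+x. ennreal (norm ((cmod (fz f x))\<^sup>2)) \<partial>lebesgue) < \<infinity>"
      unfolding fin using a by (simp add: infinity_ennreal_def)
    then have i: "integrable lebesgue (\<lambda>x. (cmod (fz f x))\<^sup>2)"
      unfolding integrable_iff_bounded using m2 by blast
    show "L2 f" using L m i by blast
  qed
qed

lemma L2norm_eq:
  assumes "fz f \<in> borel_measurable lebesgue"
  shows "L2norm f = sqrt (enn2real (NN f))"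
proof -
  have e: "(\<lambda>x. indicator {0..} x *\<^sub>R (cmod (f x))\<^sup>2) = (\<lambda>x. (cmod (fz f x))\<^sup>2)"
    by (auto simp: fz_def indicator_def)
  have m: "(\<lambda>x. (cmod (fz f x))\<^sup>2) \<in> borel_measurable lebesgue" using assms by measurable
  show ?thesis
    unfolding L2norm_def set_lebesgue_integral_def e NN_alt
    by (subst integral_eq_nn_integral[OF m]) auto
qed

lemma L2norm_cong: "(\<And>x. x \<ge> 0 \<Longrightarrow> p x = q x) \<Longrightarrow> L2norm p = L2norm q"
proof -
  assume h: "\<And>x. x \<ge> 0 \<Longrightarrow> p x = q x"
  have "(\<lambda>x. indicator {0..} x *\<^sub>R (cmod (p x))\<^sup>2) = (\<lambda>x. indicator {0..} x *\<^sub>R (cmod (q x))\<^sup>2)"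
    using h by (auto simp: indicator_def)
  then show ?thesis unfolding L2norm_def set_lebesgue_integral_def by simp
qed

lemma NN_cmult:
  assumes hm: "h \<in> borel_measurable lebesgue"
  shows "NN (\<lambda>x. c * h x) = ennreal ((cmod c)\<^sup>2) * NN h"
proof -
  have "NN (\<lambda>x. c * h x) = (\<integral>\<^sup>+x. ennreal ((cmod c)\<^sup>2) * ennreal (indicator {0..} x * (cmod (h x))\<^sup>2) \<partial>lebesgue)"
    unfolding NN_def
  proof (intro nn_integral_cong)
    fix x
    have "indicator {0..} x * (cmod (c * h x))\<^sup>2 = (cmod c)\<^sup>2 * (indicator {0..} x * (cmod (h x))\<^sup>2)"
      by (simp add: norm_mult power_mult_distrib)
    then show "ennreal (indicator {0..} x * (cmod (c * h x))\<^sup>2) = ennreal ((cmod c)\<^sup>2) * ennreal (indicator {0..} x * (cmod (h x))\<^sup>2)"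
      by (simp only: ) (rule ennreal_mult, simp, simp)
  qed
  also have "\<dots> = ennreal ((cmod c)\<^sup>2) * NN h"
    unfolding NN_def by (rule nn_integral_cmult) (rule NN_meas[OF hm])
  finally show ?thesis .
qed

lemma NN_add_le:
  assumes am: "a \<in> borel_measurable lebesgue" and bm: "b \<in> borel_measurable lebesgue"
  shows "NN (\<lambda>x. a x + b x) \<le> 2 * NN a + 2 * NN b" and "NN (\<lambda>x. a x - b x) \<le> 2 * NN a + 2 * NN b"
proof -
  have Am: "(\<lambda>x. 2 * ennreal (indicator {0..} x * (cmod (a x))\<^sup>2)) \<in> borel_measurable lebesgue"
    using NN_meas[OF am] by measurable
  have Bm: "(\<lambda>x. 2 * ennreal (indicator {0..} x * (cmod (b x))\<^sup>2)) \<in> borel_measurable lebesgue"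
    using NN_meas[OF bm] by measurable
  have pt: "ennreal (indicator {0..} x * (cmod (s))\<^sup>2) \<le> 2 * ennreal (indicator {0..} x * (cmod (a x))\<^sup>2) + 2 * ennreal (indicator {0..} x * (cmod (b x))\<^sup>2)"
    if "(cmod s)\<^sup>2 \<le> 2 * (cmod (a x))\<^sup>2 + 2 * (cmod (b x))\<^sup>2" for x s
  proof -
    define i where "i = (indicator {0..} x :: real)"
    have i0: "i \<ge> 0" unfolding i_def by simp
    have "i * (cmod s)\<^sup>2 \<le> 2 * (i * (cmod (a x))\<^sup>2) + 2 * (i * (cmod (b x))\<^sup>2)"
      using mult_left_mono[OF that i0] by (simp add: algebra_simps)
    then have "ennreal (i * (cmod s)\<^sup>2) \<le> ennreal (2 * (i * (cmod (a x))\<^sup>2) + 2 * (i * (cmod (b x))\<^sup>2))"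
      by (rule ennreal_leI)
    also have "\<dots> = ennreal (2 * (i * (cmod (a x))\<^sup>2)) + ennreal (2 * (i * (cmod (b x))\<^sup>2))"
      by (rule ennreal_plus) (use i0 in auto)
    also have "ennreal (2 * (i * (cmod (a x))\<^sup>2)) = 2 * ennreal (i * (cmod (a x))\<^sup>2)"
      by (subst ennreal_mult) (use i0 in auto)
    also have "ennreal (2 * (i * (cmod (b x))\<^sup>2)) = 2 * ennreal (i * (cmod (b x))\<^sup>2)"
      by (subst ennreal_mult) (use i0 in auto)
    finally show ?thesis unfolding i_def .
  qed
  have int: "(\<integral>\<^sup>+x. 2 * ennreal (indicator {0..} x * (cmod (a x))\<^sup>2) + 2 * ennreal (indicator {0..} x * (cmod (b x))\<^sup>2) \<partial>lebesgue) = 2 * NN a + 2 * NN b"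
    unfolding NN_def
    by (simp only: nn_integral_add[OF Am Bm] nn_integral_cmult[OF NN_meas[OF am]] nn_integral_cmult[OF NN_meas[OF bm]])
  have p1: "(cmod (a x + b x))\<^sup>2 \<le> 2 * (cmod (a x))\<^sup>2 + 2 * (cmod (b x))\<^sup>2" for x
    using par_c[of "a x" "b x"] by (smt (verit) zero_le_power2)
  have p2: "(cmod (a x - b x))\<^sup>2 \<le> 2 * (cmod (a x))\<^sup>2 + 2 * (cmod (b x))\<^sup>2" for x
    using par_c[of "a x" "b x"] by (smt (verit) zero_le_power2)
  show "NN (\<lambda>x. a x + b x) \<le> 2 * NN a + 2 * NN b"
    unfolding int[symmetric] unfolding NN_def by (intro nn_integral_mono pt p1)
  show "NN (\<lambda>x. a x - b x) \<le> 2 * NN a + 2 * NN b"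
    unfolding int[symmetric] unfolding NN_def by (intro nn_integral_mono pt p2)
qed

lemma NN_lin_fin:
  assumes am: "a \<in> borel_measurable lebesgue" and bm: "b \<in> borel_measurable lebesgue"
    and "NN a < top" "NN b < top"
  shows "NN (\<lambda>x. a x + b x) < top" and "NN (\<lambda>x. a x - b x) < top"
proof -
  have "2 * NN a + 2 * NN b < top" using assms(3,4) by (simp add: ennreal_mult_less_top)
  then show "NN (\<lambda>x. a x + b x) < top" "NN (\<lambda>x. a x - b x) < top"
    using NN_add_le[OF am bm] by (auto intro: le_less_trans)
qed

definition r2 :: complex where "r2 = complex_of_real (sqrt 2)"

lemma r2_nz: "r2 \<noteq> 0" by (simp add: r2_def)
lemma r2_sq: "r2 * r2 = 2" unfolding r2_def by (simp flip: of_real_mult)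
lemma r2_cmod: "(cmod r2)\<^sup>2 = 2" unfolding r2_def by simp
lemma r2_inv_cmod: "(cmod (inverse r2))\<^sup>2 = 1/2" unfolding r2_def by (simp add: norm_inverse power_inverse)

lemma NN_div:
  assumes hm: "h \<in> borel_measurable lebesgue"
  shows "NN (\<lambda>x. h x / r2) = ennreal (1/2) * NN h"
proof -
  have "NN (\<lambda>x. h x / r2) = NN (\<lambda>x. inverse r2 * h x)" by (simp add: field_simps)
  also have "\<dots> = ennreal (1/2) * NN h" by (simp only: NN_cmult[OF hm] r2_inv_cmod)
  finally show ?thesis .
qed

definition UU :: "(real \<Rightarrow> complex) \<Rightarrow> real \<Rightarrow> complex" where
  "UU f x = (fz f x - SS (fz f) x) / r2"

lemma UU_meas: "fz f \<in> borel_measurable lebesgue \<Longrightarrow> UU f \<in> borel_measurable lebesgue"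
proof -
  assume a: "fz f \<in> borel_measurable lebesgue"
  have "SS (fz f) \<in> borel_measurable lebesgue" by (rule Ser_meas[OF a])
  then show ?thesis unfolding UU_def[abs_def] using a by measurable
qed

lemma NN_UU:
  assumes a: "fz f \<in> borel_measurable lebesgue" and n: "NN f < top"
  shows "NN (UU f) = NN f"
proof -
  have n': "NN (fz f) < top" using n by (simp add: NN_fz)
  have m: "(\<lambda>x. fz f x - SS (fz f) x) \<in> borel_measurable lebesgue"
    using a Ser_meas[OF a] by measurable
  have "NN (UU f) = ennreal (1/2) * NN (\<lambda>x. fz f x - SS (fz f) x)"
    unfolding UU_def by (rule NN_div[OF m])
  also have "\<dots> = ennreal (1/2) * (2 * NN (fz f))" by (simp only: iso[OF a n'])
  also have "\<dots> = (ennreal (1/2) * 2) * NN (fz f)" by (simp only: mult.assoc)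
  also have "ennreal (1/2) * 2 = 1"
  proof -
    have h: "ennreal (1/2) * ennreal 2 = ennreal ((1/2) * 2)" by (rule ennreal_mult[symmetric]) auto
    have h1: "ennreal ((1/2) * 2) = 1" by simp
    show ?thesis using h h1 by (simp only: ennreal_numeral)
  qed
  finally show ?thesis by (simp add: NN_fz)
qed

lemma UU_L2: "L2 f \<Longrightarrow> L2 (UU f) \<and> NN (UU f) = NN f"
proof -
  assume "L2 f"
  then have a: "fz f \<in> borel_measurable lebesgue" and n: "NN f < top" by (auto simp: L2_iff)
  have "NN (UU f) = NN f" by (rule NN_UU[OF a n])
  moreover have "fz (UU f) \<in> borel_measurable lebesgue" by (rule fz_meas[OF UU_meas[OF a]])
  ultimately show ?thesis using n by (simp add: L2_iff)
qed


lemma cmult_fin: "X < top \<Longrightarrow> ennreal c * X < top"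
proof -
  assume "X < top"
  then obtain r where "X = ennreal r" by (auto simp: less_top_ennreal)
  then show ?thesis by (simp add: ennreal_mult_less_top)
qed

lemma r2_sq2: "r2\<^sup>2 = 2" using r2_sq by (simp add: power2_eq_square)

lemma UU_norm: "L2 f \<Longrightarrow> L2norm (UU f) = L2norm f"
proof -
  assume a: "L2 f"
  then have "L2 (UU f)" and e: "NN (UU f) = NN f" using UU_L2 by auto
  then show ?thesis using a by (simp add: L2_iff L2norm_eq e)
qed

lemma UU_add:
  assumes "L2 f" "L2 g"
  shows "ae_eq (UU (\<lambda>x. f x + g x)) (\<lambda>x. UU f x + UU g x)"
proof -
  from assms have fm: "fz f \<in> borel_measurable lebesgue" and nf: "NN (fz f) < top"
    and gm: "fz g \<in> borel_measurable lebesgue" and ng: "NN (fz g) < top"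
    by (auto simp: L2_iff NN_fz)
  have AEf: "AE x in lebesgue. x \<ge> 0 \<longrightarrow> summable (\<lambda>k. cmod (1 * fz f (2 ^ Suc k * x)))"
    using SS_key[OF fm nf] by blast
  have AEg: "AE x in lebesgue. x \<ge> 0 \<longrightarrow> summable (\<lambda>k. cmod (1 * fz g (2 ^ Suc k * x)))"
    using SS_key[OF gm ng] by blast
  have fzadd: "fz (\<lambda>x. f x + g x) = (\<lambda>x. fz f x + fz g x)"
    by (simp add: fz_def fun_eq_iff scaleR_add_right)
  show ?thesis unfolding ae_eq_def using AEf AEg
  proof eventually_elim
    case (elim x)
    show ?case
    proof
      assume "x \<in> {0..}"
      then have sf: "summable (\<lambda>k. cmod (1 * fz f (2 ^ Suc k * x)))"
        and sg: "summable (\<lambda>k. cmod (1 * fz g (2 ^ Suc k * x)))" using elim by auto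
      have "SS (\<lambda>y. fz f y + fz g y) x = SS (fz f) x + SS (fz g) x"
        by (rule Ser_add) (use sf sg in simp_all)
      then show "UU (\<lambda>x. f x + g x) x = UU f x + UU g x"
        unfolding UU_def fzadd using r2_nz by (simp add: field_simps)
    qed
  qed
qed

lemma UU_mult:
  assumes "L2 f"
  shows "ae_eq (UU (\<lambda>x. c * f x)) (\<lambda>x. c * UU f x)"
proof -
  from assms have fm: "fz f \<in> borel_measurable lebesgue" and nf: "NN (fz f) < top"
    by (auto simp: L2_iff NN_fz)
  have AEf: "AE x in lebesgue. x \<ge> 0 \<longrightarrow> summable (\<lambda>k. cmod (1 * fz f (2 ^ Suc k * x)))"
    using SS_key[OF fm nf] by blast
  have fzm: "fz (\<lambda>x. c * f x) = (\<lambda>x. c * fz f x)"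
    by (simp add: fz_def fun_eq_iff mult_scaleR_right)
  show ?thesis unfolding ae_eq_def using AEf
  proof eventually_elim
    case (elim x)
    show ?case
    proof
      assume "x \<in> {0..}"
      then have sf: "summable (\<lambda>k. cmod (1 * fz f (2 ^ Suc k * x)))" using elim by auto
      have "SS (\<lambda>y. c * fz f y) x = c * SS (fz f) x"
        by (rule Ser_mult) (use sf in simp_all)
      then show "UU (\<lambda>x. c * f x) x = c * UU f x"
        unfolding UU_def fzm by (simp add: algebra_simps)
    qed
  qed
qed

lemma UU_surj:
  assumes "L2 g"
  shows "\<exists>f. L2 f \<and> ae_eq (UU f) g"
proof -
  define g0 where "g0 = fz g"
  from assms have g0m: "g0 \<in> borel_measurable lebesgue" and ng0: "NN g0 < top"
    by (auto simp: L2_iff NN_fz g0_def)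
  define v where "v = RR g0"
  have vm: "v \<in> borel_measurable lebesgue" unfolding v_def by (rule Ser_meas[OF g0m])
  have AEv: "AE x in lebesgue. x \<ge> 0 \<longrightarrow> summable (\<lambda>k. cmod (complex_of_real (1 / 2 ^ Suc k) * g0 (1 / 2 ^ Suc k * x)))"
    and nv: "NN v < top" using RR_key[OF g0m ng0] unfolding v_def by auto
  have recv: "AE x in lebesgue. x \<ge> 0 \<longrightarrow> v (2 * x) = g0 x / 2 + v x / 2"
    using AEv
  proof eventually_elim
    case (elim x) then show ?case using RR_rec[of g0 x] unfolding v_def by blast
  qed
  define f where "f x = (g0 x - v x) / r2" for x
  have gvm: "(\<lambda>x. g0 x - v x) \<in> borel_measurable lebesgue" using g0m vm by measurable
  have fm: "f \<in> borel_measurable lebesgue" unfolding f_def[abs_def] using gvm by measurable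
  have nf: "NN f < top"
  proof -
    have "NN f = ennreal (1/2) * NN (\<lambda>x. g0 x - v x)" unfolding f_def by (rule NN_div[OF gvm])
    moreover have "NN (\<lambda>x. g0 x - v x) < top" by (rule NN_lin_fin(2)[OF g0m vm ng0 nv])
    ultimately show ?thesis using cmult_fin[of "NN (\<lambda>x. g0 x - v x)" "1/2"] by simp
  qed
  have fzfm: "fz f \<in> borel_measurable lebesgue" by (rule fz_meas[OF fm])
  have nfz: "NN (fz f) < top" using nf by (simp add: NN_fz)
  have L2f: "L2 f" using fzfm nf by (simp add: L2_iff)
  define u where "u = SS (fz f)"
  have um: "u \<in> borel_measurable lebesgue" unfolding u_def by (rule Ser_meas[OF fzfm])
  have AEu: "AE x in lebesgue. x \<ge> 0 \<longrightarrow> summable (\<lambda>k. cmod (1 * fz f (2 ^ Suc k * x)))"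
    and nu: "NN u < top" using SS_key[OF fzfm nfz] unfolding u_def by auto
  have recu: "AE x in lebesgue. x \<ge> 0 \<longrightarrow> u x = f (2 * x) + u (2 * x)"
    using AEu
  proof eventually_elim
    case (elim x)
    show ?case
    proof
      assume x: "x \<ge> 0"
      then have "u x = fz f (2 * x) + u (2 * x)" using SS_rec[of "fz f" x] elim unfolding u_def by blast
      then show "u x = f (2 * x) + u (2 * x)" using x by (simp add: fz_ge0)
    qed
  qed
  define w where "w x = - (g0 x + v x) / r2" for x
  have gvm2: "(\<lambda>x. g0 x + v x) \<in> borel_measurable lebesgue" using g0m vm by measurable
  have wm: "w \<in> borel_measurable lebesgue" unfolding w_def[abs_def] using gvm2 by measurable
  have nw: "NN w < top"
  proof -
    have nm: "cmod (- (a + b) / r2) = cmod ((a + b) / r2)" for a b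
      by (simp only: minus_divide_left[symmetric] norm_minus_cancel)
    have "NN w = NN (\<lambda>x. (g0 x + v x) / r2)" unfolding NN_def w_def by (simp only: nm)
    also have "\<dots> = ennreal (1/2) * NN (\<lambda>x. g0 x + v x)" by (rule NN_div[OF gvm2])
    finally show ?thesis using NN_lin_fin(1)[OF g0m vm ng0 nv] cmult_fin[of "NN (\<lambda>x. g0 x + v x)" "1/2"] by simp
  qed
  have recw: "AE x in lebesgue. x \<ge> 0 \<longrightarrow> w x = f (2 * x) + w (2 * x)"
    using recv
  proof eventually_elim
    case (elim x)
    show ?case
    proof
      assume x: "x \<ge> 0"
      have "f (2 * x) + w (2 * x) = - (2 * v (2 * x)) / r2"
        unfolding f_def w_def using r2_nz by (simp add: field_simps)
      also have "\<dots> = - (g0 x + v x) / r2" using elim x by (simp add: field_simps)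
      finally show "w x = f (2 * x) + w (2 * x)" unfolding w_def by simp
    qed
  qed
  define h where "h x = u x - w x" for x
  have hm: "h \<in> borel_measurable lebesgue" unfolding h_def[abs_def] using um wm by measurable
  have nh: "NN h < top" unfolding h_def by (rule NN_lin_fin(2)[OF um wm nu nw])
  have rech: "AE x in lebesgue. x \<ge> 0 \<longrightarrow> h x = h (2 * x)"
    using recu recw by eventually_elim (auto simp: h_def)
  have h0: "AE x in lebesgue. x \<ge> 0 \<longrightarrow> h x = 0" by (rule uniq[OF hm nh rech])
  have "ae_eq (UU f) g"
    unfolding ae_eq_def using h0
  proof eventually_elim
    case (elim x)
    show ?case
    proof
      assume "x \<in> {0..}"
      then have x: "x \<ge> 0" by simp
      then have uw: "u x = w x" using elim by (simp add: h_def)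
      have "UU f x = (f x - w x) / r2" unfolding UU_def using x uw by (simp add: fz_ge0 u_def)
      also have "f x - w x = 2 * g0 x / r2" unfolding f_def w_def using r2_nz by (simp add: field_simps)
      also have "2 * g0 x / r2 / r2 = g0 x" by (simp add: divide_divide_eq_left r2_sq)
      also have "g0 x = g x" using x by (simp add: g0_def fz_ge0)
      finally show "UU f x = g x" .
    qed
  qed
  with L2f show ?thesis by blast
qed

lemma coef_one: "coef 1 = 1" by (simp add: coef_def)

lemma coef_pow: "k \<ge> 1 \<Longrightarrow> coef (2 ^ k) = -1"
proof -
  assume k: "k \<ge> 1"
  have "(1::nat) < 2 ^ k" using one_less_power[of "2::nat" k] k by simp
  then have ne: "(2::nat) ^ k \<noteq> 1" by linarith
  have ex: "\<exists>j::nat. j \<ge> 1 \<and> (2::nat) ^ k = 2 ^ j" using k by blast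
  show ?thesis unfolding coef_def using ne ex by simp
qed

lemma coef_zero: "(\<And>k. n \<noteq> 2 ^ k) \<Longrightarrow> coef n = 0"
proof -
  assume h: "\<And>k. n \<noteq> 2 ^ k"
  have "n \<noteq> 1" using h[of 0] by simp
  then show ?thesis using h unfolding coef_def by auto
qed

lemma C0_props:
  assumes "C0pos f"
  shows "f \<in> borel_measurable lebesgue \<and> NN f < top \<and> f 0 = 0 \<and> (\<exists>b. \<forall>y. f y \<noteq> 0 \<longrightarrow> y \<le> b)"
proof -
  obtain K where cont: "continuous_on {0<..} f" and K: "compact K" "K \<subseteq> {0<..}"
    and out: "\<And>x. x \<notin> K \<Longrightarrow> f x = 0"
    using assms unfolding C0pos_def by blast
  obtain m :: real where m: "m > 0" "\<And>x. x \<in> K \<Longrightarrow> m \<le> x"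
  proof (cases "K = {}")
    case True then show ?thesis using that[of 1] by auto
  next
    case False
    then obtain s where "s \<in> K" "\<forall>t\<in>K. s \<le> t" using compact_attains_inf[OF K(1)] by blast
    then show ?thesis using that[of s] K(2) by auto
  qed
  have c2: "continuous_on {..<m} f"
  proof (rule continuous_on_eq[OF continuous_on_const[of "{..<m}" 0]])
    fix x assume "x \<in> {..<m}"
    then have "x \<notin> K" using m(2) by force
    then show "0 = f x" using out by simp
  qed
  have "continuous_on ({0<..} \<union> {..<m}) f"
    by (rule continuous_on_open_Un) (use cont c2 in auto)
  moreover have "{0<..} \<union> {..<m} = (UNIV :: real set)" using m(1) by auto
  ultimately have cU: "continuous_on UNIV f" by simp
  have fm: "f \<in> borel_measurable lebesgue"
    by (rule measurable_completion) (simp add: borel_measurable_continuous_onI[OF cU])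
  have f0: "f 0 = 0" using out K(2) by auto
  obtain b where b: "\<forall>x\<in>K. \<bar>x\<bar> \<le> b" using compact_imp_bounded[OF K(1)] by (auto simp: bounded_real)
  have bnd: "\<forall>y. f y \<noteq> 0 \<longrightarrow> y \<le> b" using b out by force
  have "compact (f ` K)" by (rule compact_continuous_image[OF continuous_on_subset[OF cU] K(1)]) simp
  then have "bounded (f ` K)" by (rule compact_imp_bounded)
  then obtain M where M: "\<forall>z\<in>f ` K. norm z \<le> M" unfolding bounded_iff by blast
  have Kl: "K \<in> fmeasurable lebesgue" using lmeasurable_compact[OF K(1)] .
  have "NN f \<le> (\<integral>\<^sup>+x. ennreal (M\<^sup>2) * indicator K x \<partial>lebesgue)"
    unfolding NN_def
  proof (intro nn_integral_mono)
    fix x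
    show "ennreal (indicator {0..} x * (cmod (f x))\<^sup>2) \<le> ennreal (M\<^sup>2) * indicator K x"
    proof (cases "x \<in> K")
      case True
      then have "cmod (f x) \<le> M" using M by auto
      then have "(cmod (f x))\<^sup>2 \<le> M\<^sup>2" by (intro power_mono) auto
      then have "indicator {0..} x * (cmod (f x))\<^sup>2 \<le> M\<^sup>2" by (auto simp: indicator_def)
      then show ?thesis using True by (simp add: ennreal_leI)
    next
      case False then show ?thesis using out by simp
    qed
  qed
  also have "\<dots> = ennreal (M\<^sup>2) * emeasure lebesgue K"
    by (rule nn_integral_cmult_indicator) (use Kl in auto)
  also have "\<dots> < top" using fmeasurableD2[OF Kl] by (simp add: ennreal_mult_less_top less_top)
  finally show ?thesis using fm f0 bnd by blast
qed

lemma C0_summable: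
  assumes "C0pos f" "x \<ge> 0"
  shows "summable (\<lambda>k. f (2 ^ Suc k * x)) \<and> summable (\<lambda>k. cmod (1 * f (2 ^ Suc k * x)))"
proof -
  obtain b where b: "\<forall>y. f y \<noteq> 0 \<longrightarrow> y \<le> b" and f0: "f 0 = 0" using C0_props[OF assms(1)] by blast
  obtain n where n: "\<And>k. k \<ge> n \<Longrightarrow> f (2 ^ Suc k * x) = 0"
  proof (cases "x = 0")
    case True then show ?thesis using that[of 0] f0 by simp
  next
    case False
    then have xp: "x > 0" using assms(2) by simp
    obtain n where n: "b / x < 2 ^ n" using real_arch_pow[of "2::real" "b / x"] by auto
    show ?thesis
    proof (rule that[of n])
      fix k assume k: "k \<ge> n"
      have "(2::real) ^ n \<le> 2 ^ Suc k" using k by (intro power_increasing) auto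
      then have "b / x < 2 ^ Suc k" using n by simp
      then have "b < 2 ^ Suc k * x" using xp by (simp add: divide_less_eq)
      then show "f (2 ^ Suc k * x) = 0" using b by force
    qed
  qed
  have s1: "summable (\<lambda>k. f (2 ^ Suc k * x))"
    by (rule summable_finite[of "{..<n}"]) (use n in auto)
  have s2: "summable (\<lambda>k. cmod (1 * f (2 ^ Suc k * x)))"
    by (rule summable_finite[of "{..<n}"]) (use n in auto)
  show ?thesis using s1 s2 by blast
qed

lemma Top_eq:
  assumes "C0pos f" "x \<ge> 0"
  shows "Top f x = f x - SS f x"
proof -
  obtain s1: "summable (\<lambda>k. f (2 ^ Suc k * x))" and s2: "summable (\<lambda>k. cmod (1 * f (2 ^ Suc k * x)))"
    using C0_summable[OF assms] by blast
  define S0 where "S0 = (\<Sum>k. f (2 ^ Suc k * x))"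
  have SS0: "SS f x = S0" using s2 unfolding Ser_def S0_def by simp
  define F where "F n = coef (Suc n) * f (real (Suc n) * x)" for n
  define g :: "nat \<Rightarrow> nat" where "g k = 2 ^ k - 1" for k
  define G where "G k = coef (2 ^ k) * f (2 ^ k * x)" for k
  have sm: "strict_mono g" unfolding strict_mono_Suc_iff
  proof
    fix n
    show "g n < g (Suc n)" unfolding g_def by (rule diff_less_mono) auto
  qed
  have zero: "F n = 0" if "n \<notin> range g" for n
  proof -
    have "Suc n \<noteq> 2 ^ k" for k
    proof
      assume "Suc n = 2 ^ k"
      then have "n = g k" unfolding g_def by simp
      then show False using that by simp
    qed
    then show ?thesis unfolding F_def by (simp add: coef_zero)
  qed
  have FG: "(\<lambda>k. F (g k)) = G"
  proof
    fix k
    have "Suc (2 ^ k - 1) = (2::nat) ^ k" by simp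
    then show "F (g k) = G k" unfolding F_def G_def g_def by (simp only: of_nat_power) simp
  qed
  have G0: "G 0 = f x" unfolding G_def by (simp add: coef_def)
  have GS: "G (Suc k) = - f (2 ^ Suc k * x)" for k unfolding G_def by (simp add: coef_pow del: power_Suc)
  have "(\<lambda>k. f (2 ^ Suc k * x)) sums S0" unfolding S0_def using s1 by (rule summable_sums)
  then have "(\<lambda>k. G (Suc k)) sums (- S0)" unfolding GS by (rule sums_minus)
  then have "G sums (- S0 + G 0)" by (simp add: sums_Suc_iff)
  then have "G sums (f x - S0)" using G0 by simp
  then have "(\<lambda>k. F (g k)) sums (f x - S0)" using FG by simp
  moreover have "(\<lambda>k. F (g k)) sums (f x - S0) \<longleftrightarrow> F sums (f x - S0)"
    by (rule sums_mono_reindex[where g=g and f=F and c="f x - S0"]) (use sm zero in auto)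
  ultimately have "F sums (f x - S0)" by blast
  then have "Top f x = f x - S0" unfolding Top_def F_def[symmetric] by (simp add: sums_iff)
  then show ?thesis using SS0 by simp
qed

lemma Top_UU:
  assumes "C0pos f" "x \<ge> 0"
  shows "Top f x = complex_of_real (sqrt 2) * UU f x"
proof -
  have "SS (fz f) x = SS f x"
    by (rule Ser_restrict) (use assms(2) in \<open>simp_all add: fz_ge0\<close>)
  then have "UU f x = (f x - SS f x) / r2" unfolding UU_def using assms(2) by (simp add: fz_ge0)
  then show ?thesis using Top_eq[OF assms] r2_nz by (simp add: r2_def[symmetric])
qed

theorem mainTheorem10:
  shows "(\<forall>f. C0pos f \<longrightarrow> L2norm (Top f) = sqrt 2 * L2norm f) \<and>
         (\<exists>U. unitary_L2 U \<and>
              (\<forall>f. C0pos f \<longrightarrow> ae_eq (Top f) (\<lambda>x. complex_of_real (sqrt 2) * U f x)))"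
proof (intro conjI allI impI)
  have unit: "unitary_L2 UU"
    unfolding unitary_L2_def using UU_L2 UU_add UU_mult UU_surj UU_norm by blast
  have ae: "\<forall>f. C0pos f \<longrightarrow> ae_eq (Top f) (\<lambda>x. complex_of_real (sqrt 2) * UU f x)"
    unfolding ae_eq_def using Top_UU by (auto intro!: AE_I2)
  show "\<exists>U. unitary_L2 U \<and> (\<forall>f. C0pos f \<longrightarrow> ae_eq (Top f) (\<lambda>x. complex_of_real (sqrt 2) * U f x))"
    using unit ae by blast
next
  fix f assume C: "C0pos f"
  then have fm: "f \<in> borel_measurable lebesgue" and nf: "NN f < top" using C0_props by auto
  have fzm: "fz f \<in> borel_measurable lebesgue" by (rule fz_meas[OF fm])
  have L2f: "L2 f" using fzm nf by (simp add: L2_iff)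
  have Um: "UU f \<in> borel_measurable lebesgue" by (rule UU_meas[OF fzm])
  have rUm: "(\<lambda>x. r2 * UU f x) \<in> borel_measurable lebesgue" using Um by measurable
  have "L2norm (Top f) = L2norm (\<lambda>x. r2 * UU f x)"
    by (rule L2norm_cong) (simp add: Top_UU[OF C] r2_def)
  also have "\<dots> = sqrt (enn2real (NN (\<lambda>x. r2 * UU f x)))" by (rule L2norm_eq[OF fz_meas[OF rUm]])
  also have "NN (\<lambda>x. r2 * UU f x) = ennreal 2 * NN f"
    by (simp only: NN_cmult[OF Um] r2_cmod NN_UU[OF fzm nf])
  also have "enn2real (ennreal 2 * NN f) = 2 * enn2real (NN f)" by (simp add: enn2real_mult)
  also have "sqrt (2 * enn2real (NN f)) = sqrt 2 * L2norm f"
    by (simp add: L2norm_eq[OF fzm] real_sqrt_mult)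
  finally show "L2norm (Top f) = sqrt 2 * L2norm f" .
qed

end
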